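(* Let $V$, $f$, $\mathcal{A}$, $k,\tau,\eta$ be as described in the context (in particular $f$ normalized monotone submodular, $\mathcal{A}$ satisfying the $\beta$-iterative property, $\eta\ge4(\log k+1)$, $2\le\tau\le\frac{k}{3\eta(\log k+2)}$). Let $Y$ and $Z$ be buckets constructed by PRo such that $Z$ is constructed at a later time than $Y$, and let $E_Y\subseteq Y$ and $E_Z\subseteq Z$ be arbitrary. Let $X\subseteq V$ be any set and $\alpha\ge0$ a constant such that $$f((Y\setminus E_Y)\cup X)\ge\frac{1}{1+\alpha}f(Y)\quad\text{and}\quad f(E_Y\mid X)\le\alpha f(X).$$ Then, with $\alpha_{\mathrm{next}}=\beta\frac{|E_Z|}{|Y|}(1+\alpha)+\alpha$, $$f(E_Z\mid(Y\setminus E_Y)\cup X)\le\alpha_{\mathrm{next}}\,f((Y\setminus E_Y)\cup X)$$ and $$f((Z\setminus E_Z)\cup(Y\setminus E_Y)\cup X)\ge\frac{1}{1+\alpha_{\mathrm{next}}}f(Z).$$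
   Context: Notation: $f(Y\mid X):=f(X\cup Y)-f(X)$; logarithms are to base 2. $V$ is a finite ground set, $f:2^V\to\mathbb{R}_{\ge0}$ is normalized ($f(\emptyset)=0$), monotone and submodular. A subroutine $\mathcal{A}(k',T)$ outputs an ordered set $(v_1,\dots,v_{k'})$ of elements of $T\subseteq V$; $\mathcal{A}_i(T)=\{v_1,\dots,v_i\}$; it satisfies the $\beta$-iterative property ($\beta\ge1$) if $f(\mathcal{A}_{i+1}(T))-f(\mathcal{A}_i(T))\ge\frac1\beta\max_{v\in T}f(v\mid\mathcal{A}_i(T))$ for all $T,i$. Algorithm PRo (inputs $V,k,\tau,\eta\in\mathbb{N}_+,\mathcal{A}$): $S_0\leftarrow\emptyset$; for $i=0,\dots,\lceil\log\tau\rceil$ and for $j=1,\dots,\lceil\tau/2^i\rceil$: $B_j\leftarrow\mathcal{A}(2^i\eta,V\setminus S_0)$, $S_0\leftarrow S_0\cup B_j$ (each such $B_j$ is a bucket of partition $i$); then $S_1\leftarrow\mathcal{A}(k-|S_0|,V\setminus S_0)$; output $S=S_0\cup S_1$. *)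

theory Defs
  imports Complex_Main
begin

definition marg :: "('a set \<Rightarrow> real) \<Rightarrow> 'a set \<Rightarrow> 'a set \<Rightarrow> real" where
  "marg f Y X = f (X \<union> Y) - f X"

definition normalized :: "('a set \<Rightarrow> real) \<Rightarrow> bool" where
  "normalized f \<longleftrightarrow> f {} = 0"

definition nonneg_on :: "'a set \<Rightarrow> ('a set \<Rightarrow> real) \<Rightarrow> bool" where
  "nonneg_on V f \<longleftrightarrow> (\<forall>X. X \<subseteq> V \<longrightarrow> f X \<ge> 0)"

definition monotone_set_fun :: "'a set \<Rightarrow> ('a set \<Rightarrow> real) \<Rightarrow> bool" where
  "monotone_set_fun V f \<longleftrightarrow> (\<forall>X Y. X \<subseteq> Y \<longrightarrow> Y \<subseteq> V \<longrightarrow> f X \<le> f Y)"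

definition submodular :: "'a set \<Rightarrow> ('a set \<Rightarrow> real) \<Rightarrow> bool" where
  "submodular V f \<longleftrightarrow>
     (\<forall>X Y. X \<subseteq> V \<longrightarrow> Y \<subseteq> V \<longrightarrow> f X + f Y \<ge> f (X \<union> Y) + f (X \<inter> Y))"

definition subroutine_wf :: "'a set \<Rightarrow> (nat \<Rightarrow> 'a set \<Rightarrow> 'a list) \<Rightarrow> bool" where
  "subroutine_wf V A \<longleftrightarrow> (\<forall>k' T. T \<subseteq> V \<longrightarrow>
      distinct (A k' T) \<and> set (A k' T) \<subseteq> T \<and> length (A k' T) = min k' (card T))"

definition A_prefix :: "(nat \<Rightarrow> 'a set \<Rightarrow> 'a list) \<Rightarrow> nat \<Rightarrow> nat \<Rightarrow> 'a set \<Rightarrow> 'a set" where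
  "A_prefix A k' i T = set (take i (A k' T))"

definition beta_iterative ::
  "'a set \<Rightarrow> ('a set \<Rightarrow> real) \<Rightarrow> (nat \<Rightarrow> 'a set \<Rightarrow> 'a list) \<Rightarrow> real \<Rightarrow> bool" where
  "beta_iterative V f A \<beta> \<longleftrightarrow> (\<forall>k' T i. T \<subseteq> V \<longrightarrow> i < length (A k' T) \<longrightarrow>
      f (A_prefix A k' (Suc i) T) - f (A_prefix A k' i T)
        \<ge> (1 / \<beta>) * Max ((\<lambda>v. marg f {v} (A_prefix A k' i T)) ` T))"

definition pro_sizes :: "nat \<Rightarrow> nat \<Rightarrow> nat list" where
  "pro_sizes \<tau> \<eta> = concat (map (\<lambda>i. replicate (nat \<lceil>real \<tau> / 2 ^ i\<rceil>) (2 ^ i * \<eta>))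
                                  [0..<nat \<lceil>log 2 (real \<tau>)\<rceil> + 1])"

text \<open>Buckets, given the set R = V - S_0 of still available elements.\<close>
fun pro_buckets_aux :: "(nat \<Rightarrow> 'a set \<Rightarrow> 'a list) \<Rightarrow> 'a set \<Rightarrow> nat list \<Rightarrow> 'a set list" where
  "pro_buckets_aux A R [] = []"
| "pro_buckets_aux A R (s # ss) =
     (let B = set (A s R) in B # pro_buckets_aux A (R - B) ss)"

definition pro_buckets :: "(nat \<Rightarrow> 'a set \<Rightarrow> 'a list) \<Rightarrow> 'a set \<Rightarrow> nat \<Rightarrow> nat \<Rightarrow> 'a set list" where
  "pro_buckets A V \<tau> \<eta> = pro_buckets_aux A V (pro_sizes \<tau> \<eta>)"

end

theory Submission
  imports Defs
begin

lemma wfD: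
  assumes "subroutine_wf V A" "T \<subseteq> V"
  shows "distinct (A k T)" "set (A k T) \<subseteq> T" "length (A k T) = min k (card T)"
  using assms unfolding subroutine_wf_def by simp_all

lemma monoD:
  assumes "monotone_set_fun V f" "X \<subseteq> Y" "Y \<subseteq> V"
  shows "f X \<le> f Y"
  using assms unfolding monotone_set_fun_def by simp

lemma nnD:
  assumes "nonneg_on V f" "X \<subseteq> V"
  shows "f X \<ge> 0"
  using assms unfolding nonneg_on_def by simp

lemma dimret:
  assumes mono: "monotone_set_fun V f" and sub: "submodular V f"
    and "A \<subseteq> B" "B \<subseteq> V" "C \<subseteq> V"
  shows "f (B \<union> C) - f B \<le> f (A \<union> C) - f A"
proof -
  have s1: "A \<union> C \<subseteq> V" using assms by auto
  have "f (A \<union> C) + f B \<ge> f ((A \<union> C) \<union> B) + f ((A \<union> C) \<inter> B)"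
    using sub[unfolded submodular_def, rule_format, OF s1 assms(4)] .
  moreover have "(A \<union> C) \<union> B = B \<union> C" using assms by blast
  moreover have "f A \<le> f ((A \<union> C) \<inter> B)"
  proof -
    have "A \<subseteq> (A \<union> C) \<inter> B" "(A \<union> C) \<inter> B \<subseteq> V" using assms by auto
    then show ?thesis using mono[unfolded monotone_set_fun_def, rule_format] by blast
  qed
  ultimately show ?thesis by simp
qed

lemma subadd:
  assumes mono: "monotone_set_fun V f" and sub: "submodular V f"
    and "finite E" "E \<subseteq> V" "Y \<subseteq> V"
  shows "marg f E Y \<le> (\<Sum>e\<in>E. marg f {e} Y)"
  using assms(3,4)
proof (induction E rule: finite_induct)
  case empty
  then show ?case by (simp add: marg_def)
next
  case (insert e F)
  have "f ((Y \<union> F) \<union> {e}) - f (Y \<union> F) \<le> f (Y \<union> {e}) - f Y"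
    by (rule dimret[OF mono sub]) (use insert assms in auto)
  moreover have "Y \<union> insert e F = (Y \<union> F) \<union> {e}" by auto
  ultimately show ?case using insert by (simp add: marg_def)
qed

lemma len_aux: "length (pro_buckets_aux A R ss) = length ss"
  by (induction ss arbitrary: R) (auto simp: Let_def)

lemma bucket_sub:
  assumes "subroutine_wf V A" "R \<subseteq> V" "j < length ss"
  shows "pro_buckets_aux A R ss ! j \<subseteq> R"
  using assms(2,3)
proof (induction ss arbitrary: R j)
  case Nil then show ?case by simp
next
  case (Cons s ss)
  show ?case
  proof (cases j)
    case 0
    then show ?thesis using wfD(2)[OF assms(1) Cons.prems(1), of s] by (simp add: Let_def)
  next
    case (Suc j')
    have "pro_buckets_aux A (R - set (A s R)) ss ! j' \<subseteq> R - set (A s R)"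
      using Cons.IH[of "R - set (A s R)" j'] Cons.prems Suc by auto
    then show ?thesis using Suc by (auto simp: Let_def)
  qed
qed

lemma bucket_struct:
  assumes "subroutine_wf V A" "R \<subseteq> V" "a < b" "b < length ss"
  shows "\<exists>R'. R' \<subseteq> R \<and> pro_buckets_aux A R ss ! a = set (A (ss!a) R')
              \<and> pro_buckets_aux A R ss ! b \<subseteq> R'"
  using assms(2,3,4)
proof (induction ss arbitrary: R a b)
  case Nil then show ?case by simp
next
  case (Cons s ss)
  obtain b' where b: "b = Suc b'" using Cons.prems by (cases b) auto
  show ?case
  proof (cases a)
    case 0
    have "pro_buckets_aux A (R - set (A s R)) ss ! b' \<subseteq> R - set (A s R)"
      by (rule bucket_sub[OF assms(1)]) (use Cons b in auto)
    then show ?thesis using 0 b by (intro exI[of _ R]) (auto simp: Let_def)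
  next
    case (Suc a')
    obtain R' where "R' \<subseteq> R - set (A s R)"
      "pro_buckets_aux A (R - set (A s R)) ss ! a' = set (A (ss!a') R')"
      "pro_buckets_aux A (R - set (A s R)) ss ! b' \<subseteq> R'"
      using Cons.IH[of "R - set (A s R)" a' b'] Cons.prems Suc b by auto
    then show ?thesis using Suc b by (intro exI[of _ R']) (auto simp: Let_def)
  qed
qed

lemma greedy:
  assumes fin: "finite V" and norm: "normalized f" and mono: "monotone_set_fun V f"
    and sub: "submodular V f" and wf: "subroutine_wf V A" and bpos: "\<beta> \<ge> 1"
    and it: "beta_iterative V f A \<beta>" and T: "T \<subseteq> V" and e: "e \<in> T"
  shows "real (length (A s T)) * marg f {e} (set (A s T)) \<le> \<beta> * f (set (A s T))"
proof -
  define L where "L = A s T"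
  define n where "n = length L"
  define p where "p = (\<lambda>i. A_prefix A s i T)"
  have LT: "set L \<subseteq> T" unfolding L_def by (rule wfD(2)[OF wf T])
  have step: "f (p (Suc i)) - f (p i) \<ge> (1/\<beta>) * marg f {e} (set L)" if "i < n" for i
  proof -
    have il: "i < length (A s T)" using that unfolding n_def L_def .
    have "f (p (Suc i)) - f (p i) \<ge> (1/\<beta>) * Max ((\<lambda>v. marg f {v} (p i)) ` T)"
      unfolding p_def by (rule it[unfolded beta_iterative_def, rule_format, OF T il])
    moreover have "marg f {e} (p i) \<le> Max ((\<lambda>v. marg f {v} (p i)) ` T)"
      using Max_ge[OF finite_imageI[OF finite_subset[OF T fin]] imageI[OF e]] .
    moreover have "marg f {e} (set L) \<le> marg f {e} (p i)"
    proof -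
      have "p i \<subseteq> set L" unfolding p_def A_prefix_def L_def by (meson set_take_subset)
      moreover have "set L \<subseteq> V" using LT T by (rule subset_trans)
      moreover have "{e} \<subseteq> V" using e T by blast
      ultimately show ?thesis unfolding marg_def by (rule dimret[OF mono sub])
    qed
    moreover have "(1/\<beta>) * marg f {e} (set L) \<le> (1/\<beta>) * Max ((\<lambda>v. marg f {v} (p i)) ` T)"
      using calculation(2,3) bpos by (intro mult_left_mono) auto
    ultimately show ?thesis by linarith
  qed
  have "(\<Sum>i<n. f (p (Suc i)) - f (p i)) = f (p n) - f (p 0)"
    by (rule sum_lessThan_telescope)
  moreover have "p n = set L" "p 0 = {}"
    unfolding p_def A_prefix_def n_def L_def by auto
  moreover have "(\<Sum>i<n. (1/\<beta>) * marg f {e} (set L)) \<le> (\<Sum>i<n. f (p (Suc i)) - f (p i))"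
    using step by (intro sum_mono) simp
  ultimately have "real n * ((1/\<beta>) * marg f {e} (set L)) \<le> f (set L)"
    using norm unfolding normalized_def by simp
  then have "\<beta> * (real n * ((1/\<beta>) * marg f {e} (set L))) \<le> \<beta> * f (set L)"
    using bpos by (intro mult_left_mono) auto
  moreover have "\<beta> * (real n * ((1/\<beta>) * marg f {e} (set L))) = real n * marg f {e} (set L)"
    using bpos by simp
  ultimately show ?thesis unfolding n_def L_def by simp
qed

theorem lemma5:
  fixes V :: "'a set" and f :: "'a set \<Rightarrow> real"
    and A :: "nat \<Rightarrow> 'a set \<Rightarrow> 'a list"
    and k \<tau> \<eta> :: nat and \<beta> \<alpha> :: real
    and a b :: nat and Y Z E\<^sub>Y E\<^sub>Z X :: "'a set"
  assumes "finite V"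
    and "normalized f" and "nonneg_on V f" and "monotone_set_fun V f" and "submodular V f"
    and "subroutine_wf V A" and "\<beta> \<ge> 1" and "beta_iterative V f A \<beta>"
    and "\<eta> \<ge> 1"
    and "real \<eta> \<ge> 4 * (log 2 (real k) + 1)"
    and "2 \<le> \<tau>"
    and "real \<tau> \<le> real k / (3 * real \<eta> * (log 2 (real k) + 2))"
    and "a < b" and "b < length (pro_buckets A V \<tau> \<eta>)"
    and "Y = pro_buckets A V \<tau> \<eta> ! a" and "Z = pro_buckets A V \<tau> \<eta> ! b"
    and "E\<^sub>Y \<subseteq> Y" and "E\<^sub>Z \<subseteq> Z" and "X \<subseteq> V" and "\<alpha> \<ge> 0"
    and "f ((Y - E\<^sub>Y) \<union> X) \<ge> (1 / (1 + \<alpha>)) * f Y"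
    and "marg f E\<^sub>Y X \<le> \<alpha> * f X"
  shows "let \<alpha>\<^sub>n\<^sub>e\<^sub>x\<^sub>t = \<beta> * (real (card E\<^sub>Z) / real (card Y)) * (1 + \<alpha>) + \<alpha> in
           marg f E\<^sub>Z ((Y - E\<^sub>Y) \<union> X) \<le> \<alpha>\<^sub>n\<^sub>e\<^sub>x\<^sub>t * f ((Y - E\<^sub>Y) \<union> X)
         \<and> f ((Z - E\<^sub>Z) \<union> (Y - E\<^sub>Y) \<union> X) \<ge> (1 / (1 + \<alpha>\<^sub>n\<^sub>e\<^sub>x\<^sub>t)) * f Z"
proof -
  note fin = assms(1) and norm = assms(2) and nn = assms(3) and mono = assms(4)
    and sub = assms(5) and wf = assms(6) and bge = assms(7) and it = assms(8)
  define ss where "ss = pro_sizes \<tau> \<eta>"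
  have lenb: "b < length ss" using assms(14) unfolding pro_buckets_def ss_def len_aux .
  obtain R where R: "R \<subseteq> V" "Y = set (A (ss!a) R)" "Z \<subseteq> R"
    using bucket_struct[OF wf order.refl assms(13) lenb] assms(15,16)
    unfolding pro_buckets_def ss_def by blast
  have "ss ! a \<in> set ss" using lenb assms(13) by auto
  then have s1: "ss ! a \<ge> 1" using assms(9) unfolding ss_def pro_sizes_def by auto
  define W where "W = (Y - E\<^sub>Y) \<union> X"
  define an where "an = \<beta> * (real (card E\<^sub>Z) / real (card Y)) * (1 + \<alpha>) + \<alpha>"
  have "set (A (ss!a) R) \<subseteq> R" by (rule wfD(2)[OF wf R(1)])
  then have YV: "Y \<subseteq> V" using R by auto
  have ZV: "Z \<subseteq> V" using R by auto
  have WV: "W \<subseteq> V" using YV assms(19) unfolding W_def by auto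
  have EZV: "E\<^sub>Z \<subseteq> V" using ZV assms(18) by auto
  have finEZ: "finite E\<^sub>Z" using EZV fin by (rule finite_subset)
  have fW: "f W \<ge> 0" by (rule nnD[OF nn WV])
  have fY: "f Y \<ge> 0" by (rule nnD[OF nn YV])
  have an0: "an \<ge> 0" using bge assms(20) unfolding an_def by simp
  have fXW: "f X \<le> f W" by (rule monoD[OF mono _ WV]) (auto simp: W_def)
  have part1: "marg f E\<^sub>Z W \<le> an * f W"
  proof (cases "card Y = 0")
    case True
    have cY: "card Y = length (A (ss!a) R)" using R(2) distinct_card[OF wfD(1)[OF wf R(1)]] by simp
    moreover have "length (A (ss!a) R) = min (ss!a) (card R)" by (rule wfD(3)[OF wf R(1)])
    ultimately have "card R = 0" using True s1 by linarith
    then have "R = {}" using R fin by (meson card_0_eq finite_subset)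
    then have "E\<^sub>Z = {}" using R assms(18) by auto
    then show ?thesis using an0 fW by (simp add: marg_def)
  next
    case False
    have cY: "card Y = length (A (ss!a) R)" using R(2) distinct_card[OF wfD(1)[OF wf R(1)]] by simp
    have each: "marg f {e} Y \<le> \<beta> / real (card Y) * f Y" if "e \<in> E\<^sub>Z" for e
    proof -
      have "e \<in> R" using that R assms(18) by auto
      from greedy[OF fin norm mono sub wf bge it R(1) this, of "ss!a"]
      have "real (card Y) * marg f {e} Y \<le> \<beta> * f Y" using R cY by simp
      then show ?thesis using False by (simp add: field_simps)
    qed
    have "marg f E\<^sub>Z Y \<le> (\<Sum>e\<in>E\<^sub>Z. marg f {e} Y)"
      by (rule subadd[OF mono sub finEZ EZV YV])
    also have "\<dots> \<le> (\<Sum>e\<in>E\<^sub>Z. \<beta> / real (card Y) * f Y)"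
      using each by (intro sum_mono) auto
    finally have mY: "marg f E\<^sub>Z Y \<le> real (card E\<^sub>Z) * (\<beta> / real (card Y) * f Y)" by simp
    have mono1: "marg f E\<^sub>Z W \<le> f (W \<union> E\<^sub>Z \<union> E\<^sub>Y) - f W"
    proof -
      have sV: "W \<union> E\<^sub>Z \<union> E\<^sub>Y \<subseteq> V" using WV EZV assms(17) YV by blast
      have "f (W \<union> E\<^sub>Z) \<le> f (W \<union> E\<^sub>Z \<union> E\<^sub>Y)"
        by (rule monoD[OF mono _ sV]) blast
      then show ?thesis by (simp add: marg_def)
    qed
    have eq: "W \<union> E\<^sub>Y = Y \<union> X" using assms(17) unfolding W_def by auto
    have d1: "f ((Y \<union> X) \<union> E\<^sub>Z) - f (Y \<union> X) \<le> f (Y \<union> E\<^sub>Z) - f Y"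
      by (rule dimret[OF mono sub]) (use YV assms(19) EZV in auto)
    have d2: "f (W \<union> E\<^sub>Y) - f W \<le> f (X \<union> E\<^sub>Y) - f X"
      by (rule dimret[OF mono sub]) (use WV assms(17) YV in \<open>auto simp: W_def\<close>)
    have "W \<union> E\<^sub>Z \<union> E\<^sub>Y = (Y \<union> X) \<union> E\<^sub>Z" using eq by auto
    then have "marg f E\<^sub>Z W \<le> marg f E\<^sub>Z Y + marg f E\<^sub>Y X"
      using mono1 d1 d2 eq unfolding marg_def by (simp add: sup_commute)
    moreover have "f Y \<le> (1 + \<alpha>) * f W"
      using assms(21,20) unfolding W_def by (simp add: field_simps)
    moreover have "real (card E\<^sub>Z) * (\<beta> / real (card Y) * f Y)
        \<le> real (card E\<^sub>Z) * (\<beta> / real (card Y) * ((1 + \<alpha>) * f W))"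
      using calculation(2) bge by (intro mult_left_mono) auto
    moreover have "\<alpha> * f X \<le> \<alpha> * f W" using fXW assms(20) by (rule mult_left_mono)
    moreover have "real (card E\<^sub>Z) * (\<beta> / real (card Y) * ((1 + \<alpha>) * f W)) + \<alpha> * f W = an * f W"
      unfolding an_def by (simp add: field_simps)
    ultimately show ?thesis using mY assms(22) by linarith
  qed
  have part2: "f ((Z - E\<^sub>Z) \<union> W) \<ge> (1 / (1 + an)) * f Z"
  proof -
    define U where "U = (Z - E\<^sub>Z) \<union> W"
    have UV: "U \<subseteq> V" using ZV WV unfolding U_def by auto
    have "f (U \<union> E\<^sub>Z) - f U \<le> f (W \<union> E\<^sub>Z) - f W"
      by (rule dimret[OF mono sub]) (use UV EZV in \<open>auto simp: U_def\<close>)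
    moreover have "U \<union> E\<^sub>Z = Z \<union> W" using assms(18) unfolding U_def by auto
    moreover have "f Z \<le> f (Z \<union> W)" by (rule monoD[OF mono]) (use ZV WV in auto)
    moreover have "f W \<le> f U" by (rule monoD[OF mono _ UV]) (auto simp: U_def)
    moreover have "an * f W \<le> an * f U" using calculation(4) an0 by (rule mult_left_mono)
    moreover have "f (W \<union> E\<^sub>Z) - f W \<le> an * f W" using part1 unfolding marg_def .
    moreover have "f (U \<union> E\<^sub>Z) = f (Z \<union> W)" using calculation(2) by simp
    ultimately have "f Z \<le> f U + an * f U" by linarith
    then have fz: "f Z \<le> (1 + an) * f U" by (simp add: algebra_simps)
    have "1 / (1 + an) * f Z = f Z / (1 + an)" by simp
    also have "\<dots> \<le> f U"
    proof -
      have pos: "0 < 1 + an" using an0 by linarith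
      have "f Z \<le> f U * (1 + an)" using fz by (simp only: mult.commute)
      then show ?thesis using pos_divide_le_eq[OF pos] by blast
    qed
    finally show ?thesis unfolding U_def .
  qed
  have eqS: "(Z - E\<^sub>Z) \<union> (Y - E\<^sub>Y) \<union> X = (Z - E\<^sub>Z) \<union> W" unfolding W_def by auto
  have p2: "f ((Z - E\<^sub>Z) \<union> (Y - E\<^sub>Y) \<union> X) \<ge> (1 / (1 + (\<beta> * (real (card E\<^sub>Z) / real (card Y)) * (1 + \<alpha>) + \<alpha>))) * f Z"
    unfolding eqS using part2 unfolding an_def .
  have p1: "marg f E\<^sub>Z ((Y - E\<^sub>Y) \<union> X) \<le> (\<beta> * (real (card E\<^sub>Z) / real (card Y)) * (1 + \<alpha>) + \<alpha>) * f ((Y - E\<^sub>Y) \<union> X)"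
    using part1 unfolding an_def W_def .
  show ?thesis unfolding Let_def by (rule conjI[OF p1 p2])
qed

end
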